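(* In the setting described in the context, for every node deployment $\mathbf{P}$, every cell partitioning $\mathbf{W}$ and every normalized flow matrix $\mathbf{S}$, $$\mathcal{D}(\mathbf{P},\mathbf{W},\mathbf{S})\ \ge\ \mathcal{D}\big(\mathbf{P},\mathcal{V}(\mathbf{P},\mathbf{S}),\mathbf{S}\big),$$ where $\mathcal{V}(\mathbf{P},\mathbf{S})$ is the generalized Voronoi diagram.
   Context: Let $\Omega\subset\mathbb{R}^2$ be a convex polygon (including its interior). Let $N,M\ge1$ be integers; $\mathcal{I_A}=\{1,\dots,N\}$ (access points, APs), $\mathcal{I_F}=\{N+1,\dots,N+M\}$ (fusion centers, FCs). A node deployment is $\mathbf{P}=(p_1,\dots,p_{N+M})$ with $p_n\in\Omega$. Let $f:\Omega\to\mathbb{R}^+$ be continuous and differentiable and $R_b>0$ a constant. A cell partitioning $\mathbf{W}=(W_1,\dots,W_N)$ is a partition of $\Omega$ into Borel sets; $v(W_n)=\int_{W_n}f(\omega)d\omega$. A normalized flow matrix $\mathbf{S}=[s_{i,j}]$, $i\in\mathcal{I_A}$, $j\in\mathcal{I_A}\cup\mathcal{I_F}$, satisfies $s_{i,j}\in[0,1]$, $\sum_{j=1}^{N+M}s_{i,j}=1$ for each $i$, and has no cycles: whenever $\prod_{k=1}^K s_{l_{k-1},l_k}>0$ then $s_{l_K,l_0}=0$ (in particular $s_{i,i}=0$). The flows $F_{i,j}(\mathbf{W},\mathbf{S})$ are the unique numbers with $F_{i,j}=s_{i,j}F_i$, where $F_i=\sum_{j=1}^{N+M}F_{i,j}=R_bv(W_i)+\sum_{j=1}^NF_{j,i}$.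 Positive constants $\eta_n$ ($n\in\mathcal{I_A}$), $\beta_{i,j}$ ($i\in\mathcal{I_A}$, $j\in\mathcal{I_A}\cup\mathcal{I_F}$), nonnegative constants $\rho_n$ ($n\in\mathcal{I_A}$) and $\lambda\ge0$ are given. The total communication power is $$\mathcal{D}(\mathbf{P},\mathbf{W},\mathbf{S})=\sum_{n=1}^N\int_{W_n}\eta_n\|p_n-\omega\|^2R_bf(\omega)d\omega+\lambda\Big[\sum_{i=1}^N\sum_{j=1}^{N+M}\beta_{i,j}\|p_i-p_j\|^2F_{i,j}+\sum_{n=1}^N\rho_n\Big(\sum_{i=1}^NF_{i,n}+R_bv(W_n)\Big)\Big].$$ AP power coefficient: for $n\in\mathcal{I_A}$, summing over all directed paths $L:n=l_0\to\cdots\to l_J$ with $l_0,\dots,l_{J-1}\in\mathcal{I_A}$, $l_J\in\mathcal{I_F}$, $\prod_i s_{l_{i-1},l_i}>0$, $g_n(\mathbf{P},\mathbf{S})=\sum_L\prod_{i=1}^Js_{l_{i-1},l_i}\big(\sum_{j=1}^J\beta_{l_{j-1},l_j}\|p_{l_{j-1}}-p_{l_j}\|^2+\sum_{j=1}^{J-1}\rho_{l_j}\big)$. Generalized Voronoi diagram: $\mathcal{V}(\mathbf{P},\mathbf{S})=(\mathcal{V}_1,\dots,\mathcal{V}_N)$ with $\mathcal{V}_n=\{\omega\in\Omega:\eta_n\|p_n-\omega\|^2+\lambda g_n(\mathbf{P},\mathbf{S})+\lambda\rho_n\le\eta_k\|p_k-\omega\|^2+\lambda g_k(\mathbf{P},\mathbf{S})+\lambda\rho_k\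 \forall k\ne n\}$, with ties broken in favor of the smaller index (so the $\mathcal{V}_n$ form a Borel partition of $\Omega$). *)

theory Defs
  imports "HOL-Analysis.Analysis"
begin

type_synonym pt = "real^2"

text \<open>Indices: APs are 1..N, FCs are N+1..N+M.  A flow matrix s :: nat => nat => real
  is read at rows i in {1..N} and columns j in {1..N+M}.\<close>

definition cell_partition :: "pt set \<Rightarrow> nat \<Rightarrow> (nat \<Rightarrow> pt set) \<Rightarrow> bool" where
  "cell_partition \<Omega> N W \<longleftrightarrow>
     (\<forall>n\<in>{1..N}. W n \<in> sets borel) \<and>
     (\<forall>n\<in>{1..N}. \<forall>m\<in>{1..N}. n \<noteq> m \<longrightarrow> W n \<inter> W m = {}) \<and>
     (\<Union>n\<in>{1..N}. W n) = \<Omega>"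

definition vol :: "(pt \<Rightarrow> real) \<Rightarrow> pt set \<Rightarrow> real" where
  "vol f A = (LINT \<omega>:A|lborel. f \<omega>)"

definition path_prod :: "(nat \<Rightarrow> nat \<Rightarrow> real) \<Rightarrow> nat list \<Rightarrow> real" where
  "path_prod s l = (\<Prod>k<length l - 1. s (l ! k) (l ! Suc k))"

definition flow_matrix :: "nat \<Rightarrow> nat \<Rightarrow> (nat \<Rightarrow> nat \<Rightarrow> real) \<Rightarrow> bool" where
  "flow_matrix N M s \<longleftrightarrow>
     (\<forall>i\<in>{1..N}. \<forall>j\<in>{1..N+M}. 0 \<le> s i j \<and> s i j \<le> 1) \<and>
     (\<forall>i\<in>{1..N}. (\<Sum>j=1..N+M. s i j) = 1) \<and>
     (\<forall>l. l \<noteq> [] \<and> set l \<subseteq> {1..N} \<and> path_prod s l > 0 \<longrightarrow> s (last l) (hd l) = 0)"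

text \<open>The flow equations; F is required to vanish outside the index domain so that
  "the unique numbers" can be expressed with THE.\<close>
definition flow_eqs :: "nat \<Rightarrow> nat \<Rightarrow> real \<Rightarrow> (pt \<Rightarrow> real) \<Rightarrow> (nat \<Rightarrow> pt set)
      \<Rightarrow> (nat \<Rightarrow> nat \<Rightarrow> real) \<Rightarrow> (nat \<Rightarrow> nat \<Rightarrow> real) \<Rightarrow> bool" where
  "flow_eqs N M Rb f W s F \<longleftrightarrow>
     (\<forall>i\<in>{1..N}. \<forall>j\<in>{1..N+M}. F i j = s i j * (\<Sum>j'=1..N+M. F i j')) \<and>
     (\<forall>i\<in>{1..N}. (\<Sum>j=1..N+M. F i j) = Rb * vol f (W i) + (\<Sum>j=1..N. F j i)) \<and>
     (\<forall>i j. \<not> (i \<in> {1..N} \<and> j \<in> {1..N+M}) \<longrightarrow> F i j = 0)"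

definition flows :: "nat \<Rightarrow> nat \<Rightarrow> real \<Rightarrow> (pt \<Rightarrow> real) \<Rightarrow> (nat \<Rightarrow> pt set)
      \<Rightarrow> (nat \<Rightarrow> nat \<Rightarrow> real) \<Rightarrow> (nat \<Rightarrow> nat \<Rightarrow> real)" where
  "flows N M Rb f W s = (THE F. flow_eqs N M Rb f W s F)"

definition Dpow :: "nat \<Rightarrow> nat \<Rightarrow> real \<Rightarrow> (pt \<Rightarrow> real) \<Rightarrow> (nat \<Rightarrow> real)
      \<Rightarrow> (nat \<Rightarrow> nat \<Rightarrow> real) \<Rightarrow> (nat \<Rightarrow> real) \<Rightarrow> real
      \<Rightarrow> (nat \<Rightarrow> pt) \<Rightarrow> (nat \<Rightarrow> pt set) \<Rightarrow> (nat \<Rightarrow> nat \<Rightarrow> real) \<Rightarrow> real" where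
  "Dpow N M Rb f \<eta> \<beta> \<rho> lam P W s =
     (let F = flows N M Rb f W s in
       (\<Sum>n=1..N. (LINT \<omega>:W n|lborel. \<eta> n * (norm (P n - \<omega>))\<^sup>2 * Rb * f \<omega>))
       + lam * ((\<Sum>i=1..N. \<Sum>j=1..N+M. \<beta> i j * (norm (P i - P j))\<^sup>2 * F i j)
             + (\<Sum>n=1..N. \<rho> n * ((\<Sum>i=1..N. F i n) + Rb * vol f (W n)))))"

definition ap_paths :: "nat \<Rightarrow> nat \<Rightarrow> (nat \<Rightarrow> nat \<Rightarrow> real) \<Rightarrow> nat \<Rightarrow> nat list set" where
  "ap_paths N M s n = {l. length l \<ge> 2 \<and> hd l = n \<and>
       (\<forall>k<length l - 1. l ! k \<in> {1..N}) \<and> last l \<in> {N+1..N+M} \<and> path_prod s l > 0}"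

definition gcoef :: "nat \<Rightarrow> nat \<Rightarrow> (nat \<Rightarrow> nat \<Rightarrow> real) \<Rightarrow> (nat \<Rightarrow> real)
      \<Rightarrow> (nat \<Rightarrow> pt) \<Rightarrow> (nat \<Rightarrow> nat \<Rightarrow> real) \<Rightarrow> nat \<Rightarrow> real" where
  "gcoef N M \<beta> \<rho> P s n =
     (\<Sum>l\<in>ap_paths N M s n. path_prod s l *
        ((\<Sum>j=1..length l - 1. \<beta> (l ! (j-1)) (l ! j) * (norm (P (l ! (j-1)) - P (l ! j)))\<^sup>2)
         + (\<Sum>j=1..length l - 2. \<rho> (l ! j))))"

definition gvor :: "pt set \<Rightarrow> nat \<Rightarrow> nat \<Rightarrow> (nat \<Rightarrow> real) \<Rightarrow> (nat \<Rightarrow> nat \<Rightarrow> real)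
      \<Rightarrow> (nat \<Rightarrow> real) \<Rightarrow> real \<Rightarrow> (nat \<Rightarrow> pt) \<Rightarrow> (nat \<Rightarrow> nat \<Rightarrow> real) \<Rightarrow> nat \<Rightarrow> pt set" where
  "gvor \<Omega> N M \<eta> \<beta> \<rho> lam P s n =
     (let c = (\<lambda>k \<omega>. \<eta> k * (norm (P k - \<omega>))\<^sup>2 + lam * gcoef N M \<beta> \<rho> P s k + lam * \<rho> k) in
      {\<omega>\<in>\<Omega>. (\<forall>k\<in>{1..N}. k < n \<longrightarrow> c n \<omega> < c k \<omega>) \<and>
             (\<forall>k\<in>{1..N}. n < k \<longrightarrow> c n \<omega> \<le> c k \<omega>)})"

end

theory Submission
  imports Defs
begin

lemma path_prod_Cons: "l \<noteq> [] \<Longrightarrow> path_prod s (z # l) = s z (hd l) * path_prod s l"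
  by (cases l) (simp_all add: path_prod_def prod.lessThan_Suc_shift del: prod.lessThan_Suc)

lemma path_prod_single[simp]: "path_prod s [x] = 1"
  by (simp add: path_prod_def)

locale fm =
  fixes N M :: nat and s :: "nat \<Rightarrow> nat \<Rightarrow> real"
  assumes S: "flow_matrix N M s"
begin

lemma s_nonneg: "i \<in> {1..N} \<Longrightarrow> j \<in> {1..N+M} \<Longrightarrow> 0 \<le> s i j"
  using S unfolding flow_matrix_def by blast

lemma s_rowsum: "i \<in> {1..N} \<Longrightarrow> (\<Sum>j=1..N+M. s i j) = 1"
  using S unfolding flow_matrix_def by blast

lemma acyc: "l \<noteq> [] \<Longrightarrow> set l \<subseteq> {1..N} \<Longrightarrow> path_prod s l > 0 \<Longrightarrow> s (last l) (hd l) = 0"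
  using S unfolding flow_matrix_def by blast

definition R where "R = {(j,i). i \<in> {1..N} \<and> j \<in> {1..N} \<and> s i j > 0}"

lemma R_path:
  assumes "(a,b) \<in> R\<^sup>+"
  shows "\<exists>l. l \<noteq> [] \<and> set l \<subseteq> {1..N} \<and> hd l = b \<and> path_prod s l > 0 \<and> s (last l) a > 0"
  using assms
proof (induction rule: trancl_induct)
  case (base y)
  have "s y a > 0" "y \<in> {1..N}" using base by (auto simp: R_def)
  then show ?case by (intro exI[of _ "[y]"]) auto
next
  case (step y z)
  then obtain l where l: "l \<noteq> []" "set l \<subseteq> {1..N}" "hd l = y" "path_prod s l > 0" "s (last l) a > 0"
    by blast
  have "s z y > 0" "z \<in> {1..N}" using step(2) by (auto simp: R_def)
  with l show ?case
    by (intro exI[of _ "z # l"]) (auto simp: path_prod_Cons)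
qed

lemma acyclic_R: "acyclic R"
  unfolding acyclic_def
proof (intro allI notI)
  fix x assume "(x,x) \<in> R\<^sup>+"
  from R_path[OF this] obtain l where "l \<noteq> []" "set l \<subseteq> {1..N}" "hd l = x" "path_prod s l > 0" "s (last l) x > 0"
    by blast
  with acyc show False by force
qed

lemma finite_R: "finite R"
proof -
  have "R \<subseteq> {1..N} \<times> {1..N}" by (auto simp: R_def)
  then show ?thesis by (rule finite_subset) simp
qed

lemma wf_R: "wf R" using finite_acyclic_wf[OF finite_R acyclic_R] .
lemma wf_Rc: "wf (R\<inverse>)" using finite_acyclic_wf_converse[OF finite_R acyclic_R] .

lemma flow_unique:
  assumes F: "flow_eqs N M Rb f W s F" and G: "flow_eqs N M Rb f W s G"
  shows "F = G"
proof -
  define x where "x i = (\<Sum>j=1..N+M. F i j) - (\<Sum>j=1..N+M. G i j)" for i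
  have x0: "i \<in> {1..N} \<longrightarrow> x i = 0" for i
  proof (induction i rule: wf_induct[OF wf_Rc])
    case (1 i)
    show ?case
    proof
      assume i: "i \<in> {1..N}"
      have "(\<Sum>j=1..N+M. F i j) = Rb * vol f (W i) + (\<Sum>j=1..N. F j i)"
           "(\<Sum>j=1..N+M. G i j) = Rb * vol f (W i) + (\<Sum>j=1..N. G j i)"
        using F G i unfolding flow_eqs_def by blast+
      then have "x i = (\<Sum>j=1..N. F j i) - (\<Sum>j=1..N. G j i)"
        unfolding x_def by simp
      also have "\<dots> = (\<Sum>j=1..N. s j i * x j)"
        unfolding sum_subtractf[symmetric]
      proof (rule sum.cong[OF refl])
        fix j assume j: "j \<in> {1..N}"
        have "i \<in> {1..N+M}" using i by auto
        then have "F j i = s j i * (\<Sum>j'=1..N+M. F j j')" "G j i = s j i * (\<Sum>j'=1..N+M. G j j')"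
          using F G j unfolding flow_eqs_def by blast+
        then show "F j i - G j i = s j i * x j" by (simp add: x_def algebra_simps)
      qed
      also have "\<dots> = 0"
      proof (rule sum.neutral, rule ballI)
        fix j assume j: "j \<in> {1..N}"
        show "s j i * x j = 0"
        proof (cases "s j i > 0")
          case True
          then have "(j,i) \<in> R\<inverse>" using i j by (auto simp: R_def)
          then show ?thesis using 1 j by auto
        next
          case False
          with s_nonneg[of j i] i j have "s j i = 0" by auto
          then show ?thesis by simp
        qed
      qed
      finally show "x i = 0" .
    qed
  qed
  show "F = G"
  proof (intro ext)
    fix i j
    show "F i j = G i j"
    proof (cases "i \<in> {1..N} \<and> j \<in> {1..N+M}")
      case True
      then have "F i j = s i j * (\<Sum>j'=1..N+M. F i j')" "G i j = s i j * (\<Sum>j'=1..N+M. G i j')"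
        using F G unfolding flow_eqs_def by blast+
      moreover have "x i = 0" using x0 True by auto
      ultimately show ?thesis by (simp add: x_def)
    next
      case False
      then show ?thesis using F G unfolding flow_eqs_def by metis
    qed
  qed
qed

lemma flow_exists: "\<exists>F. flow_eqs N M Rb f W s F"
proof -
  define b where "b i = Rb * vol f (W i)" for i
  define H where "H g i = b i + (\<Sum>j=1..N. s j i * g j)" for g :: "nat \<Rightarrow> real" and i
  define T where "T = wfrec (R\<inverse>) H"
  have T: "T i = b i + (\<Sum>j=1..N. s j i * T j)" if i: "i \<in> {1..N}" for i
  proof -
    have "T i = H (cut T (R\<inverse>) i) i" unfolding T_def by (rule wfrec[OF wf_Rc])
    also have "\<dots> = b i + (\<Sum>j=1..N. s j i * T j)"
      unfolding H_def
    proof (intro arg_cong2[where f="(+)"] refl sum.cong)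
      fix j assume j: "j \<in> {1..N}"
      show "s j i * cut T (R\<inverse>) i j = s j i * T j"
      proof (cases "s j i > 0")
        case True
        then have "(j,i) \<in> R\<inverse>" using i j by (auto simp: R_def)
        then show ?thesis by (simp add: cut_apply)
      next
        case False
        with s_nonneg[of j i] i j have "s j i = 0" by auto
        then show ?thesis by simp
      qed
    qed
    finally show ?thesis .
  qed
  define F where "F i j = (if i \<in> {1..N} \<and> j \<in> {1..N+M} then s i j * T i else 0)" for i j
  have sumF: "(\<Sum>j=1..N+M. F i j) = T i" if "i \<in> {1..N}" for i
  proof -
    have "(\<Sum>j=1..N+M. F i j) = (\<Sum>j=1..N+M. s i j * T i)"
      by (rule sum.cong) (use that in \<open>auto simp: F_def\<close>)
    also have "\<dots> = T i" using s_rowsum[OF that] by (simp add: sum_distrib_right[symmetric])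
    finally show ?thesis .
  qed
  have "flow_eqs N M Rb f W s F"
    unfolding flow_eqs_def
  proof (intro conjI ballI allI impI)
    fix i j assume i: "i \<in> {1..N}" and j: "j \<in> {1..N+M}"
    show "F i j = s i j * (\<Sum>j'=1..N+M. F i j')" using sumF[OF i] i j by (simp add: F_def)
  next
    fix i assume i: "i \<in> {1..N}"
    have "(\<Sum>j=1..N. F j i) = (\<Sum>j=1..N. s j i * T j)"
      by (rule sum.cong) (use i in \<open>auto simp: F_def\<close>)
    then show "(\<Sum>j=1..N+M. F i j) = Rb * vol f (W i) + (\<Sum>j=1..N. F j i)"
      using sumF[OF i] T[OF i] by (simp add: b_def)
  next
    fix i j assume "\<not> (i \<in> {1..N} \<and> j \<in> {1..N+M})"
    then show "F i j = 0" by (auto simp: F_def)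
  qed
  then show ?thesis by blast
qed

lemma flows_eqs: "flow_eqs N M Rb f W s (flows N M Rb f W s)"
proof -
  have "\<exists>!F. flow_eqs N M Rb f W s F" using flow_exists flow_unique by blast
  then show ?thesis unfolding flows_def by (rule theI')
qed

end

context fm
begin

abbreviation "AP \<equiv> ap_paths N M s"

lemma pp_nonneg:
  assumes "l \<noteq> []" "\<forall>k<length l - 1. l ! k \<in> {1..N}" "last l \<in> {1..N+M}"
  shows "0 \<le> path_prod s l"
  unfolding path_prod_def
proof (rule prod_nonneg)
  fix k assume k: "k \<in> {..<length l - 1}"
  have "l ! Suc k \<in> {1..N+M}"
  proof (cases "Suc k < length l - 1")
    case True then show ?thesis using assms(2) by fastforce
  next
    case False
    then have "Suc k = length l - 1" using k by auto
    then show ?thesis using assms(1,3) by (simp add: last_conv_nth)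
  qed
  then show "0 \<le> s (l ! k) (l ! Suc k)" using k assms(2) s_nonneg by auto
qed

lemma ap_paths_notAP: "n \<notin> {1..N} \<Longrightarrow> AP n = {}"
proof (rule ccontr)
  assume "n \<notin> {1..N}" "AP n \<noteq> {}"
  then obtain l where l: "l \<in> AP n" by blast
  then have "l ! 0 \<in> {1..N}" "hd l = n" "l \<noteq> []" unfolding ap_paths_def by auto
  then show False using \<open>n \<notin> {1..N}\<close> by (simp add: hd_conv_nth)
qed

lemma ap_paths_len: "l \<in> AP n \<Longrightarrow> length l \<ge> 2 \<and> hd l = n \<and> l \<noteq> []"
  unfolding ap_paths_def by auto

lemma ap_paths_dec:
  assumes n: "n \<in> {1..N}"
  shows "AP n = (\<lambda>j. [n,j]) ` {j\<in>{N+1..N+M}. s n j > 0}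
             \<union> (Cons n) ` (\<Union>j\<in>{j\<in>{1..N}. s n j > 0}. AP j)"
proof (intro equalityI subsetI)
  fix l assume l: "l \<in> AP n"
  then have len: "length l \<ge> 2" and hd: "hd l = n" and inner: "\<forall>k<length l - 1. l ! k \<in> {1..N}"
    and lst: "last l \<in> {N+1..N+M}" and pp: "path_prod s l > 0"
    unfolding ap_paths_def by auto
  obtain L where lL: "l = n # L" using len hd by (cases l) auto
  have Lne: "L \<noteq> []" using len lL by auto
  show "l \<in> (\<lambda>j. [n,j]) ` {j\<in>{N+1..N+M}. s n j > 0}
             \<union> (Cons n) ` (\<Union>j\<in>{j\<in>{1..N}. s n j > 0}. AP j)"
  proof (cases "length L = 1")
    case True
    then obtain j where L: "L = [j]" by (cases L) auto
    have "j \<in> {N+1..N+M}" using lst lL L by simp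
    moreover have "s n j > 0" using pp lL L by (simp add: path_prod_Cons)
    ultimately show ?thesis using lL L by auto
  next
    case False
    moreover have "length L \<noteq> 0" using Lne by simp
    ultimately have lenL: "length L \<ge> 2" by linarith
    define j where "j = hd L"
    have jAP: "j \<in> {1..N}" using inner lL lenL Lne
      by (auto simp: j_def hd_conv_nth dest: spec[of _ 1])
    have innerL: "\<forall>k<length L - 1. L ! k \<in> {1..N}"
    proof (intro allI impI)
      fix k assume "k < length L - 1"
      then have "Suc k < length l - 1" using lL by auto
      then show "L ! k \<in> {1..N}" using inner lL by fastforce
    qed
    have lstL: "last L \<in> {N+1..N+M}" using lst lL Lne by simp
    have ppl: "path_prod s l = s n j * path_prod s L" using lL Lne by (simp add: path_prod_Cons j_def)
    have "0 \<le> path_prod s L" using pp_nonneg[OF Lne innerL] lstL by auto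
    moreover have "0 \<le> s n j" using s_nonneg n jAP by auto
    ultimately have pos: "s n j > 0" "path_prod s L > 0" using pp ppl
      by (auto simp: zero_less_mult_iff)
    have "L \<in> AP j" unfolding ap_paths_def using lenL innerL lstL pos j_def by auto
    then show ?thesis using lL jAP pos by auto
  qed
next
  fix l assume "l \<in> (\<lambda>j. [n,j]) ` {j\<in>{N+1..N+M}. s n j > 0}
             \<union> (Cons n) ` (\<Union>j\<in>{j\<in>{1..N}. s n j > 0}. AP j)"
  then consider (a) j where "j \<in> {N+1..N+M}" "s n j > 0" "l = [n,j]"
    | (b) j L where "j \<in> {1..N}" "s n j > 0" "L \<in> AP j" "l = n # L" by blast
  then show "l \<in> AP n"
  proof cases
    case a
    then show ?thesis using n unfolding ap_paths_def by (auto simp: path_prod_Cons)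
  next
    case b
    then have lenL: "length L \<ge> 2" and hdL: "hd L = j" and innerL: "\<forall>k<length L - 1. L ! k \<in> {1..N}"
      and lstL: "last L \<in> {N+1..N+M}" and ppL: "path_prod s L > 0"
      unfolding ap_paths_def by auto
    have Lne: "L \<noteq> []" using lenL by auto
    have inner: "\<forall>k<length l - 1. l ! k \<in> {1..N}"
    proof (intro allI impI)
      fix k assume k: "k < length l - 1"
      show "l ! k \<in> {1..N}"
      proof (cases k)
        case 0 then show ?thesis using b n by simp
      next
        case (Suc k') then show ?thesis using k b innerL by auto
      qed
    qed
    have "path_prod s l = s n j * path_prod s L" using b Lne hdL by (simp add: path_prod_Cons)
    then have "path_prod s l > 0" using b ppL by simp
    then show ?thesis unfolding ap_paths_def using inner lenL lstL b Lne by auto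
  qed
qed

lemma finite_ap_paths: "finite (AP n)"
proof (induction n rule: wf_induct[OF wf_R])
  case (1 n)
  show ?case
  proof (cases "n \<in> {1..N}")
    case True
    have "finite (\<Union>j\<in>{j\<in>{1..N}. s n j > 0}. AP j)"
    proof (rule finite_UN_I)
      fix j assume "j \<in> {j\<in>{1..N}. s n j > 0}"
      then have "(j,n) \<in> R" using True by (auto simp: R_def)
      then show "finite (AP j)" using 1 by blast
    qed simp
    then show ?thesis by (subst ap_paths_dec[OF True]) auto
  next
    case False then show ?thesis by (simp add: ap_paths_notAP)
  qed
qed

lemma sum_ap_paths:
  assumes n: "n \<in> {1..N}"
  shows "(\<Sum>l\<in>AP n. h l) = (\<Sum>j\<in>{j\<in>{N+1..N+M}. s n j > 0}. h [n,j])
          + (\<Sum>j\<in>{j\<in>{1..N}. s n j > 0}. \<Sum>L\<in>AP j. h (n # L))"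
proof -
  let ?A = "(\<lambda>j. [n,j]) ` {j\<in>{N+1..N+M}. s n j > 0}"
  let ?B = "(\<Union>j\<in>{j\<in>{1..N}. s n j > 0}. AP j)"
  have fB: "finite ?B" using finite_ap_paths by auto
  have disj: "?A \<inter> Cons n ` ?B = {}"
    by (auto dest!: ap_paths_len)
  have "(\<Sum>l\<in>AP n. h l) = sum h ?A + sum h (Cons n ` ?B)"
    by (subst ap_paths_dec[OF n], rule sum.union_disjoint) (use fB disj in auto)
  also have "sum h ?A = (\<Sum>j\<in>{j\<in>{N+1..N+M}. s n j > 0}. h [n,j])"
    by (subst sum.reindex) (auto simp: inj_on_def)
  also have "sum h (Cons n ` ?B) = sum (\<lambda>L. h (n # L)) ?B"
    by (subst sum.reindex) (auto simp: inj_on_def)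
  also have "\<dots> = (\<Sum>j\<in>{j\<in>{1..N}. s n j > 0}. \<Sum>L\<in>AP j. h (n # L))"
    by (rule sum.UNION_disjoint) (auto simp: finite_ap_paths dest!: ap_paths_len)
  finally show ?thesis .
qed

end

lemma sum_1_to: "(\<Sum>j=1..m. g j) = (\<Sum>k<m. g (Suc k)::real)"
  by (induct m) (auto simp: atLeastAtMostSuc_conv add.commute)

definition bd :: "(nat \<Rightarrow> nat \<Rightarrow> real) \<Rightarrow> (nat \<Rightarrow> pt) \<Rightarrow> nat \<Rightarrow> nat \<Rightarrow> real" where
  "bd \<beta> P i j = \<beta> i j * (norm (P i - P j))\<^sup>2"

definition cost :: "(nat \<Rightarrow> nat \<Rightarrow> real) \<Rightarrow> (nat \<Rightarrow> real) \<Rightarrow> (nat \<Rightarrow> pt) \<Rightarrow> nat list \<Rightarrow> real" where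
  "cost \<beta> \<rho> P l = (\<Sum>j=1..length l - 1. \<beta> (l ! (j-1)) (l ! j) * (norm (P (l ! (j-1)) - P (l ! j)))\<^sup>2)
         + (\<Sum>j=1..length l - 2. \<rho> (l ! j))"

lemma cost_alt: "cost \<beta> \<rho> P l = (\<Sum>k<length l - 1. bd \<beta> P (l ! k) (l ! Suc k)) + (\<Sum>k<length l - 2. \<rho> (l ! Suc k))"
  unfolding cost_def sum_1_to bd_def by simp

lemma cost_pair: "cost \<beta> \<rho> P [n,j] = bd \<beta> P n j"
  by (simp add: cost_alt)

lemma cost_Cons:
  assumes "length L \<ge> 2"
  shows "cost \<beta> \<rho> P (n # L) = bd \<beta> P n (hd L) + \<rho> (hd L) + cost \<beta> \<rho> P L"
proof -
  obtain a b L' where L: "L = a # b # L'" using assms by (cases L; cases "tl L") auto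
  show ?thesis unfolding cost_alt L
    by (simp add: sum.lessThan_Suc_shift del: sum.lessThan_Suc)
qed

lemma gcoef_eq: "gcoef N M \<beta> \<rho> P s n = (\<Sum>l\<in>ap_paths N M s n. path_prod s l * cost \<beta> \<rho> P l)"
  unfolding gcoef_def cost_def ..

context fm
begin

lemma filt_sum:
  assumes "X \<subseteq> {1..N+M}" "n \<in> {1..N}" "finite X"
  shows "(\<Sum>j\<in>{j\<in>X. s n j > 0}. s n j * g j) = (\<Sum>j\<in>X. s n j * g j)"
proof -
  have "(\<Sum>j\<in>{j\<in>X. s n j > 0}. s n j * g j) = (\<Sum>j\<in>X. if s n j > 0 then s n j * g j else 0)"
    using assms(3) by (rule sum.inter_filter)
  also have "\<dots> = (\<Sum>j\<in>X. s n j * g j)"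
  proof (rule sum.cong[OF refl])
    fix j assume "j \<in> X"
    then have "0 \<le> s n j" using assms s_nonneg by auto
    then show "(if s n j > 0 then s n j * g j else 0) = s n j * g j" by auto
  qed
  finally show ?thesis .
qed

lemma split_J: "(\<Sum>j=1..N+M. g j) = (\<Sum>j=1..N. g j) + (\<Sum>j=N+1..N+M. (g j::real))"
  by (rule sum.ub_add_nat) simp

lemma pp_Cons: "L \<in> AP j \<Longrightarrow> path_prod s (n # L) = s n j * path_prod s L"
  using ap_paths_len[of L j] by (simp add: path_prod_Cons)

lemma pr1: "n \<in> {1..N} \<Longrightarrow> (\<Sum>l\<in>AP n. path_prod s l) = 1"
proof (induction n rule: wf_induct[OF wf_R])
  case (1 n)
  have "(\<Sum>l\<in>AP n. path_prod s l) = (\<Sum>j\<in>{j\<in>{N+1..N+M}. s n j > 0}. s n j * 1)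
          + (\<Sum>j\<in>{j\<in>{1..N}. s n j > 0}. s n j * 1)"
  proof (subst sum_ap_paths[OF 1(2)], intro arg_cong2[where f="(+)"] sum.cong refl)
    fix j assume "j \<in> {j\<in>{N+1..N+M}. s n j > 0}"
    then show "path_prod s [n, j] = s n j * 1" by (simp add: path_prod_Cons)
  next
    fix j assume j: "j \<in> {j\<in>{1..N}. s n j > 0}"
    then have "(j,n) \<in> R" using 1(2) by (auto simp: R_def)
    then have "(\<Sum>L\<in>AP j. path_prod s L) = 1" using 1(1) j by auto
    then show "(\<Sum>L\<in>AP j. path_prod s (n # L)) = s n j * 1"
      by (simp add: pp_Cons sum_distrib_left[symmetric])
  qed
  also have "\<dots> = (\<Sum>j=N+1..N+M. s n j * 1) + (\<Sum>j=1..N. s n j * 1)"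
    using 1(2) by (subst (1 2) filt_sum) auto
  also have "\<dots> = 1" using s_rowsum[OF 1(2)] split_J[of "s n"] by simp
  finally show ?case .
qed

lemma gcoef_rec:
  assumes n: "n \<in> {1..N}"
  shows "gcoef N M \<beta> \<rho> P s n = (\<Sum>j=1..N+M. s n j * bd \<beta> P n j)
           + (\<Sum>j=1..N. s n j * (\<rho> j + gcoef N M \<beta> \<rho> P s j))"
proof -
  let ?g = "gcoef N M \<beta> \<rho> P s"
  have "?g n = (\<Sum>j\<in>{j\<in>{N+1..N+M}. s n j > 0}. s n j * bd \<beta> P n j)
          + (\<Sum>j\<in>{j\<in>{1..N}. s n j > 0}. s n j * (bd \<beta> P n j + (\<rho> j + ?g j)))"
  proof (subst gcoef_eq[where n=n], subst sum_ap_paths[OF n], intro arg_cong2[where f="(+)"] sum.cong refl)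
    fix j assume "j \<in> {j\<in>{N+1..N+M}. s n j > 0}"
    then show "path_prod s [n, j] * cost \<beta> \<rho> P [n, j] = s n j * bd \<beta> P n j"
      by (simp add: path_prod_Cons cost_pair)
  next
    fix j assume j: "j \<in> {j\<in>{1..N}. s n j > 0}"
    have pr: "(\<Sum>L\<in>AP j. path_prod s L) = 1" using pr1 j by auto
    have "(\<Sum>L\<in>AP j. path_prod s (n # L) * cost \<beta> \<rho> P (n # L))
        = (\<Sum>L\<in>AP j. s n j * ((bd \<beta> P n j + \<rho> j) * path_prod s L + path_prod s L * cost \<beta> \<rho> P L))"
    proof (rule sum.cong[OF refl])
      fix L assume L: "L \<in> AP j"
      then show "path_prod s (n # L) * cost \<beta> \<rho> P (n # L)
          = s n j * ((bd \<beta> P n j + \<rho> j) * path_prod s L + path_prod s L * cost \<beta> \<rho> P L)"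
        using ap_paths_len[OF L] by (simp add: pp_Cons cost_Cons algebra_simps)
    qed
    also have "\<dots> = s n j * ((bd \<beta> P n j + \<rho> j) * (\<Sum>L\<in>AP j. path_prod s L)
                   + (\<Sum>L\<in>AP j. path_prod s L * cost \<beta> \<rho> P L))"
      by (simp add: sum_distrib_left[symmetric] sum.distrib)
    also have "\<dots> = s n j * (bd \<beta> P n j + (\<rho> j + ?g j))"
      unfolding pr gcoef_eq by simp
    finally show "(\<Sum>L\<in>AP j. path_prod s (n # L) * cost \<beta> \<rho> P (n # L))
        = s n j * (bd \<beta> P n j + (\<rho> j + ?g j))" .
  qed
  also have "\<dots> = (\<Sum>j=N+1..N+M. s n j * bd \<beta> P n j) + (\<Sum>j=1..N. s n j * (bd \<beta> P n j + (\<rho> j + ?g j)))"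
    using n by (subst (1 2) filt_sum) auto
  also have "\<dots> = (\<Sum>j=1..N+M. s n j * bd \<beta> P n j) + (\<Sum>j=1..N. s n j * (\<rho> j + ?g j))"
    unfolding split_J[of "\<lambda>j. s n j * bd \<beta> P n j"] by (simp add: algebra_simps sum.distrib)
  finally show ?thesis .
qed

end

context fm
begin

lemma lam_identity:
  fixes Rb :: real and f W \<beta> \<rho> P
  defines "F \<equiv> flows N M Rb f W s" and "g \<equiv> gcoef N M \<beta> \<rho> P s"
  shows "(\<Sum>i=1..N. \<Sum>j=1..N+M. \<beta> i j * (norm (P i - P j))\<^sup>2 * F i j)
        + (\<Sum>n=1..N. \<rho> n * ((\<Sum>i=1..N. F i n) + Rb * vol f (W n)))
       = (\<Sum>n=1..N. (g n + \<rho> n) * (Rb * vol f (W n)))"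
proof -
  have FE: "flow_eqs N M Rb f W s F" unfolding F_def by (rule flows_eqs)
  define TF where "TF i = (\<Sum>j=1..N+M. F i j)" for i
  define b where "b n = Rb * vol f (W n)" for n
  define h where "h i = g i + \<rho> i" for i
  have E1: "F i j = s i j * TF i" if "i \<in> {1..N}" "j \<in> {1..N+M}" for i j
    using FE that unfolding flow_eqs_def TF_def by blast
  have E2: "TF n = b n + (\<Sum>i=1..N. F i n)" if "n \<in> {1..N}" for n
    using FE that unfolding flow_eqs_def TF_def b_def by blast
  have hrec: "(\<Sum>j=1..N+M. s i j * bd \<beta> P i j) + \<rho> i = h i - (\<Sum>j=1..N. s i j * h j)"
    if "i \<in> {1..N}" for i
    using gcoef_rec[OF that, of \<beta> \<rho> P] unfolding h_def g_def by (simp add: add.commute)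
  have "(\<Sum>i=1..N. \<Sum>j=1..N+M. \<beta> i j * (norm (P i - P j))\<^sup>2 * F i j)
        + (\<Sum>n=1..N. \<rho> n * ((\<Sum>i=1..N. F i n) + Rb * vol f (W n)))
      = (\<Sum>i=1..N. TF i * ((\<Sum>j=1..N+M. s i j * bd \<beta> P i j) + \<rho> i))"
    unfolding sum.distrib[symmetric]
  proof (rule sum.cong[OF refl])
    fix i assume i: "i \<in> {1..N}"
    have "(\<Sum>j=1..N+M. \<beta> i j * (norm (P i - P j))\<^sup>2 * F i j) = (\<Sum>j=1..N+M. TF i * (s i j * bd \<beta> P i j))"
      by (rule sum.cong[OF refl]) (simp add: E1[OF i] bd_def)
    moreover have "(\<Sum>i=1..N. F i i') + Rb * vol f (W i') = TF i'" if "i' = i" for i'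
      using E2[OF i] that b_def by simp
    ultimately show "(\<Sum>j=1..N+M. \<beta> i j * (norm (P i - P j))\<^sup>2 * F i j) + \<rho> i * ((\<Sum>ia=1..N. F ia i) + Rb * vol f (W i))
        = TF i * ((\<Sum>j=1..N+M. s i j * bd \<beta> P i j) + \<rho> i)"
      by (simp add: sum_distrib_left[symmetric] algebra_simps)
  qed
  also have "\<dots> = (\<Sum>i=1..N. TF i * h i - (\<Sum>j=1..N. F i j * h j))"
  proof (rule sum.cong[OF refl])
    fix i assume i: "i \<in> {1..N}"
    have "(\<Sum>j=1..N. F i j * h j) = TF i * (\<Sum>j=1..N. s i j * h j)"
      unfolding sum_distrib_left by (rule sum.cong[OF refl]) (use i in \<open>simp add: E1\<close>)
    moreover have "TF i * ((\<Sum>j=1..N+M. s i j * bd \<beta> P i j) + \<rho> i) = TF i * (h i - (\<Sum>j=1..N. s i j * h j))"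
      using hrec[OF i] by simp
    ultimately show "TF i * ((\<Sum>j=1..N+M. s i j * bd \<beta> P i j) + \<rho> i) = TF i * h i - (\<Sum>j=1..N. F i j * h j)"
      by (simp add: right_diff_distrib)
  qed
  also have "\<dots> = (\<Sum>i=1..N. TF i * h i) - (\<Sum>j=1..N. h j * (\<Sum>i=1..N. F i j))"
  proof -
    have "(\<Sum>i=1..N. \<Sum>j=1..N. F i j * h j) = (\<Sum>j=1..N. \<Sum>i=1..N. F i j * h j)"
      by (rule sum.swap)
    also have "\<dots> = (\<Sum>j=1..N. h j * (\<Sum>i=1..N. F i j))"
      by (simp add: sum_distrib_left mult.commute)
    finally show ?thesis by (simp add: sum_subtractf)
  qed
  also have "\<dots> = (\<Sum>j=1..N. h j * b j)"
    unfolding sum_subtractf[symmetric]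
    by (rule sum.cong[OF refl]) (simp add: E2 algebra_simps)
  finally show ?thesis unfolding h_def b_def .
qed

end

lemma D_eq:
  fixes \<Omega> :: "pt set" and f :: "pt \<Rightarrow> real" and W :: "nat \<Rightarrow> pt set"
  assumes S: "flow_matrix N M s"
    and intA: "\<And>n. n \<in> {1..N} \<Longrightarrow> set_integrable lborel (W n) (\<lambda>\<omega>. \<eta> n * (norm (P n - \<omega>))\<^sup>2 * Rb * f \<omega>)"
    and intf: "\<And>n. n \<in> {1..N} \<Longrightarrow> set_integrable lborel (W n) f"
  shows "Dpow N M Rb f \<eta> \<beta> \<rho> lam P W s
    = (\<Sum>n=1..N. LINT \<omega>:W n|lborel. (\<eta> n * (norm (P n - \<omega>))\<^sup>2 + lam * gcoef N M \<beta> \<rho> P s n + lam * \<rho> n) * Rb * f \<omega>)"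
proof -
  interpret fm N M s by (rule fm.intro[OF S])
  let ?g = "gcoef N M \<beta> \<rho> P s"
  have "Dpow N M Rb f \<eta> \<beta> \<rho> lam P W s
     = (\<Sum>n=1..N. (LINT \<omega>:W n|lborel. \<eta> n * (norm (P n - \<omega>))\<^sup>2 * Rb * f \<omega>))
       + lam * (\<Sum>n=1..N. (?g n + \<rho> n) * (Rb * vol f (W n)))"
    unfolding Dpow_def Let_def lam_identity ..
  also have "\<dots> = (\<Sum>n=1..N. (LINT \<omega>:W n|lborel. \<eta> n * (norm (P n - \<omega>))\<^sup>2 * Rb * f \<omega>)
       + (lam * (?g n + \<rho> n) * Rb) * (LINT \<omega>:W n|lborel. f \<omega>))"
    by (simp add: sum.distrib sum_distrib_left vol_def algebra_simps)
  also have "\<dots> = (\<Sum>n=1..N. LINT \<omega>:W n|lborel. (\<eta> n * (norm (P n - \<omega>))\<^sup>2 + lam * ?g n + lam * \<rho> n) * Rb * f \<omega>)"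
  proof (rule sum.cong[OF refl])
    fix n assume n: "n \<in> {1..N}"
    have "(LINT \<omega>:W n|lborel. (\<eta> n * (norm (P n - \<omega>))\<^sup>2 + lam * ?g n + lam * \<rho> n) * Rb * f \<omega>)
       = (LINT \<omega>:W n|lborel. \<eta> n * (norm (P n - \<omega>))\<^sup>2 * Rb * f \<omega> + (lam * (?g n + \<rho> n) * Rb) * f \<omega>)"
      by (rule arg_cong[where f="set_lebesgue_integral lborel (W n)"]) (simp add: fun_eq_iff algebra_simps)
    also have "\<dots> = (LINT \<omega>:W n|lborel. \<eta> n * (norm (P n - \<omega>))\<^sup>2 * Rb * f \<omega>)
       + (LINT \<omega>:W n|lborel. (lam * (?g n + \<rho> n) * Rb) * f \<omega>)"
      by (rule set_integral_add(2)) (use intA[OF n] intf[OF n] in auto)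
    finally show "(LINT \<omega>:W n|lborel. \<eta> n * (norm (P n - \<omega>))\<^sup>2 * Rb * f \<omega>)
       + (lam * (?g n + \<rho> n) * Rb) * (LINT \<omega>:W n|lborel. f \<omega>)
       = (LINT \<omega>:W n|lborel. (\<eta> n * (norm (P n - \<omega>))\<^sup>2 + lam * ?g n + lam * \<rho> n) * Rb * f \<omega>)"
      by simp
  qed
  finally show ?thesis .
qed

theorem proposition1:
  fixes \<Omega> :: "pt set" and N M :: nat and f :: "pt \<Rightarrow> real" and Rb lam :: real
    and \<eta> \<rho> :: "nat \<Rightarrow> real" and \<beta> :: "nat \<Rightarrow> nat \<Rightarrow> real"
    and P :: "nat \<Rightarrow> pt" and W :: "nat \<Rightarrow> pt set" and s :: "nat \<Rightarrow> nat \<Rightarrow> real"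
  assumes poly: "polytope \<Omega>" and int: "interior \<Omega> \<noteq> {}"
    and NM: "N \<ge> 1" "M \<ge> 1"
    and fcont: "continuous_on \<Omega> f" and fdiff: "f differentiable_on \<Omega>"
    and fpos: "\<forall>\<omega>\<in>\<Omega>. f \<omega> > 0"
    and Rb: "Rb > 0"
    and eta: "\<forall>n\<in>{1..N}. \<eta> n > 0"
    and beta: "\<forall>i\<in>{1..N}. \<forall>j\<in>{1..N+M}. \<beta> i j > 0"
    and rho: "\<forall>n\<in>{1..N}. \<rho> n \<ge> 0"
    and lam: "lam \<ge> 0"
    and P: "\<forall>n\<in>{1..N+M}. P n \<in> \<Omega>"
    and W: "cell_partition \<Omega> N W"
    and S: "flow_matrix N M s"
  shows "Dpow N M Rb f \<eta> \<beta> \<rho> lam P W s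
         \<ge> Dpow N M Rb f \<eta> \<beta> \<rho> lam P (gvor \<Omega> N M \<eta> \<beta> \<rho> lam P s) s"
proof -
  define c where "c k \<omega> = \<eta> k * (norm (P k - \<omega>))\<^sup>2 + lam * gcoef N M \<beta> \<rho> P s k + lam * \<rho> k" for k \<omega>
  define \<phi> where "\<phi> k \<omega> = c k \<omega> * Rb * f \<omega>" for k \<omega>
  define V where "V = gvor \<Omega> N M \<eta> \<beta> \<rho> lam P s"
  have Vdef: "V n = {\<omega>\<in>\<Omega>. (\<forall>k\<in>{1..N}. k < n \<longrightarrow> c n \<omega> < c k \<omega>) \<and> (\<forall>k\<in>{1..N}. n < k \<longrightarrow> c n \<omega> \<le> c k \<omega>)}" for n
    unfolding V_def gvor_def c_def Let_def ..
  have comp: "compact \<Omega>" using poly by (rule polytope_imp_compact)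
  have Ob: "\<Omega> \<in> sets borel" using comp by (simp add: compact_imp_closed)
  have contc: "continuous_on UNIV (c k)" for k unfolding c_def by (intro continuous_intros)
  have [measurable]: "c k \<in> borel_measurable borel" for k using contc by (rule borel_measurable_continuous_onI)
  have Wb: "W n \<in> sets borel" "W n \<subseteq> \<Omega>" if "n \<in> {1..N}" for n
    using W that unfolding cell_partition_def by auto
  have Vb: "V n \<in> sets borel" "V n \<subseteq> \<Omega>" for n
  proof -
    have "{\<omega>. (\<forall>k\<in>{1..N}. k < n \<longrightarrow> c n \<omega> < c k \<omega>) \<and> (\<forall>k\<in>{1..N}. n < k \<longrightarrow> c n \<omega> \<le> c k \<omega>)} \<in> sets borel"
      by measurable
    then have "\<Omega> \<inter> {\<omega>. (\<forall>k\<in>{1..N}. k < n \<longrightarrow> c n \<omega> < c k \<omega>) \<and> (\<forall>k\<in>{1..N}. n < k \<longrightarrow> c n \<omega> \<le> c k \<omega>)} \<in> sets borel"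
      using Ob by auto
    moreover have "V n = \<Omega> \<inter> {\<omega>. (\<forall>k\<in>{1..N}. k < n \<longrightarrow> c n \<omega> < c k \<omega>) \<and> (\<forall>k\<in>{1..N}. n < k \<longrightarrow> c n \<omega> \<le> c k \<omega>)}"
      unfolding Vdef by auto
    ultimately show "V n \<in> sets borel" by simp
    show "V n \<subseteq> \<Omega>" unfolding Vdef by auto
  qed
  have Vmin: "c k \<omega> \<le> c n \<omega>" if "\<omega> \<in> V k" "n \<in> {1..N}" for k n \<omega>
    using that unfolding Vdef by (cases "n < k"; cases "k < n") force+
  have Vdisj: "V n \<inter> V m = {}" if "n \<in> {1..N}" "m \<in> {1..N}" "n \<noteq> m" for n m
  proof -
    have key: False if ab: "a \<in> {1..N}" "b \<in> {1..N}" "a < b" "\<omega> \<in> V a" "\<omega> \<in> V b" for a b \<omega>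
    proof -
      have "c b \<omega> < c a \<omega>" using ab unfolding Vdef by auto
      moreover have "c a \<omega> \<le> c b \<omega>" using Vmin ab by auto
      ultimately show False by simp
    qed
    show ?thesis
    proof (rule ccontr)
      assume "V n \<inter> V m \<noteq> {}"
      then obtain \<omega> where w: "\<omega> \<in> V n" "\<omega> \<in> V m" by blast
      show False
      proof (cases "n < m")
        case True then show False using key[of n m \<omega>] w that by blast
      next
        case False then have "m < n" using that by simp
        then show False using key[of m n \<omega>] w that by blast
      qed
    qed
  qed
  have Vcover: "\<exists>k\<in>{1..N}. \<omega> \<in> V k" if \<omega>: "\<omega> \<in> \<Omega>" for \<omega>
  proof -
    define mv where "mv = Min ((\<lambda>k. c k \<omega>) ` {1..N})"
    have ne: "{1..N} \<noteq> {}" using NM by auto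
    have "mv \<in> (\<lambda>k. c k \<omega>) ` {1..N}" unfolding mv_def using ne by (intro Min_in) auto
    then have ex: "\<exists>k. k \<in> {1..N} \<and> c k \<omega> = mv" by auto
    define k where "k = (LEAST k. k \<in> {1..N} \<and> c k \<omega> = mv)"
    have k: "k \<in> {1..N}" "c k \<omega> = mv" using LeastI_ex[OF ex] unfolding k_def by auto
    have le: "mv \<le> c j \<omega>" if "j \<in> {1..N}" for j unfolding mv_def using that by (intro Min_le) auto
    have "\<omega> \<in> V k"
      unfolding Vdef
    proof (intro CollectI conjI ballI impI \<omega>)
      fix j assume j: "j \<in> {1..N}" "j < k"
      then have "\<not> (j \<in> {1..N} \<and> c j \<omega> = mv)" unfolding k_def using not_less_Least by blast
      then show "c k \<omega> < c j \<omega>" using j le[of j] k by auto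
    next
      fix j assume j: "j \<in> {1..N}" "k < j"
      then show "c k \<omega> \<le> c j \<omega>" using le[of j] k by auto
    qed
    then show ?thesis using k by blast
  qed
  have UV: "(\<Union>n\<in>{1..N}. V n) = \<Omega>" using Vcover Vb by blast
  have UW: "(\<Union>n\<in>{1..N}. W n) = \<Omega>" using W unfolding cell_partition_def by auto
  have contf: "continuous_on \<Omega> (\<lambda>\<omega>. g \<omega> * f \<omega>)" if "continuous_on UNIV g" for g
    by (intro continuous_intros fcont continuous_on_subset[OF that]) auto
  have intO: "set_integrable lborel \<Omega> (\<lambda>\<omega>. g \<omega> * f \<omega>)" if "continuous_on UNIV g" for g
    unfolding set_integrable_def by (rule borel_integrable_compact[OF comp contf[OF that]])
  have intphi: "set_integrable lborel \<Omega> (\<phi> k)" for k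
  proof -
    have "continuous_on UNIV (\<lambda>\<omega>. c k \<omega> * Rb)" using contc by (intro continuous_intros) auto
    from intO[OF this] show ?thesis unfolding \<phi>_def by simp
  qed
  have intphiS: "set_integrable lborel A (\<phi> k)" if "A \<in> sets borel" "A \<subseteq> \<Omega>" for A k
    using set_integrable_subset[OF intphi] that by auto
  have Deq: "Dpow N M Rb f \<eta> \<beta> \<rho> lam P U s = (\<Sum>n=1..N. LINT \<omega>:U n|lborel. \<phi> n \<omega>)"
    if U: "\<And>n. n \<in> {1..N} \<Longrightarrow> U n \<in> sets borel \<and> U n \<subseteq> \<Omega>" for U
  proof -
    have "Dpow N M Rb f \<eta> \<beta> \<rho> lam P U s
      = (\<Sum>n=1..N. LINT \<omega>:U n|lborel. (\<eta> n * (norm (P n - \<omega>))\<^sup>2 + lam * gcoef N M \<beta> \<rho> P s n + lam * \<rho> n) * Rb * f \<omega>)"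
    proof (rule D_eq[OF S])
      fix n assume n: "n \<in> {1..N}"
      have "continuous_on UNIV (\<lambda>\<omega>. \<eta> n * (norm (P n - \<omega>))\<^sup>2 * Rb)" by (intro continuous_intros)
      from intO[OF this] have i1: "set_integrable lborel \<Omega> (\<lambda>\<omega>. \<eta> n * (norm (P n - \<omega>))\<^sup>2 * Rb * f \<omega>)" by simp
      show "set_integrable lborel (U n) (\<lambda>\<omega>. \<eta> n * (norm (P n - \<omega>))\<^sup>2 * Rb * f \<omega>)"
        by (rule set_integrable_subset[OF i1]) (use U[OF n] in auto)
      have "continuous_on UNIV (\<lambda>\<omega>. 1::real)" by (intro continuous_intros)
      from intO[OF this] have i2: "set_integrable lborel \<Omega> f" by simp
      show "set_integrable lborel (U n) f"
        by (rule set_integrable_subset[OF i2]) (use U[OF n] in auto)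
    qed
    then show ?thesis unfolding \<phi>_def c_def .
  qed
  define m where "m \<omega> = (\<Sum>k=1..N. indicator (V k) \<omega> * \<phi> k \<omega>)" for \<omega>
  have m_V: "m \<omega> = \<phi> n \<omega>" if "n \<in> {1..N}" "\<omega> \<in> V n" for n \<omega>
  proof -
    have "m \<omega> = (\<Sum>k=1..N. if k = n then \<phi> n \<omega> else 0)"
      unfolding m_def
    proof (rule sum.cong[OF refl])
      fix k assume k: "k \<in> {1..N}"
      show "indicator (V k) \<omega> * \<phi> k \<omega> = (if k = n then \<phi> n \<omega> else 0)"
        using Vdisj[OF k that(1)] that by (auto simp: indicator_def)
    qed
    also have "\<dots> = \<phi> n \<omega>" using that by simp
    finally show ?thesis .
  qed
  have m_le: "m \<omega> \<le> \<phi> n \<omega>" if nw: "n \<in> {1..N}" "\<omega> \<in> \<Omega>" for n \<omega>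
  proof -
    obtain k where k: "k \<in> {1..N}" "\<omega> \<in> V k" using Vcover nw by blast
    have "0 \<le> Rb * f \<omega>" using Rb fpos nw by (simp add: less_imp_le)
    then have "c k \<omega> * (Rb * f \<omega>) \<le> c n \<omega> * (Rb * f \<omega>)"
      using Vmin[OF k(2) nw(1)] by (simp add: mult_right_mono)
    then show ?thesis using m_V[OF k] unfolding \<phi>_def by (simp add: mult.assoc)
  qed
  have intm: "set_integrable lborel \<Omega> m"
  proof -
    have "integrable lborel (\<lambda>\<omega>. \<Sum>k=1..N. indicator (V k) \<omega> *\<^sub>R \<phi> k \<omega>)"
    proof (rule Bochner_Integration.integrable_sum[where f="\<lambda>k \<omega>. indicator (V k) \<omega> *\<^sub>R \<phi> k \<omega>"])
      fix k
      show "integrable lborel (\<lambda>\<omega>. indicator (V k) \<omega> *\<^sub>R \<phi> k \<omega>)"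
        using intphiS[OF Vb(1)[of k] Vb(2)[of k]] unfolding set_integrable_def .
    qed
    moreover have "(\<lambda>\<omega>. \<Sum>k=1..N. indicator (V k) \<omega> *\<^sub>R \<phi> k \<omega>) = (\<lambda>\<omega>. indicator \<Omega> \<omega> *\<^sub>R m \<omega>)"
    proof
      fix \<omega>
      show "(\<Sum>k=1..N. indicator (V k) \<omega> *\<^sub>R \<phi> k \<omega>) = indicator \<Omega> \<omega> *\<^sub>R m \<omega>"
      proof (cases "\<omega> \<in> \<Omega>")
        case True then show ?thesis by (simp add: m_def)
      next
        case False
        then have "\<omega> \<notin> V k" for k using Vb by auto
        then show ?thesis using False by simp
      qed
    qed
    ultimately show ?thesis unfolding set_integrable_def by simp
  qed
  have intmS: "set_integrable lborel A m" if "A \<in> sets borel" "A \<subseteq> \<Omega>" for A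
    using set_integrable_subset[OF intm] that by auto
  have "Dpow N M Rb f \<eta> \<beta> \<rho> lam P V s = (\<Sum>n=1..N. LINT \<omega>:V n|lborel. \<phi> n \<omega>)"
    using Deq Vb by auto
  also have "\<dots> = (\<Sum>n=1..N. LINT \<omega>:V n|lborel. m \<omega>)"
    by (rule sum.cong[OF refl], rule set_lebesgue_integral_cong) (use Vb m_V in auto)
  also have "\<dots> = (LINT \<omega>:(\<Union>n\<in>{1..N}. V n)|lborel. m \<omega>)"
    by (rule set_integral_finite_Union[symmetric])
       (use Vb Vdisj intmS in \<open>auto simp: disjoint_family_on_def\<close>)
  also have "\<dots> = (LINT \<omega>:(\<Union>n\<in>{1..N}. W n)|lborel. m \<omega>)" unfolding UV UW ..
  also have "\<dots> = (\<Sum>n=1..N. LINT \<omega>:W n|lborel. m \<omega>)"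
    by (rule set_integral_finite_Union)
       (use Wb W intmS in \<open>auto simp: disjoint_family_on_def cell_partition_def\<close>)
  also have "\<dots> \<le> (\<Sum>n=1..N. LINT \<omega>:W n|lborel. \<phi> n \<omega>)"
  proof (rule sum_mono)
    fix n assume n: "n \<in> {1..N}"
    show "(LINT \<omega>:W n|lborel. m \<omega>) \<le> (LINT \<omega>:W n|lborel. \<phi> n \<omega>)"
      by (rule set_integral_mono) (use intmS intphiS Wb[OF n] m_le n in auto)
  qed
  also have "\<dots> = Dpow N M Rb f \<eta> \<beta> \<rho> lam P W s"
    using Deq Wb by auto
  finally show ?thesis unfolding V_def .
qed

end
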